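(* Let $\mathbb{F}_3$ be the free group on $a,b,c$, let $r = aba^{-1}b^{-1}c$ and $N$ its normal closure. Let $R = \{r_1^{\pm1},\dots,r_5^{\pm1}\}$ where $r_1 = aba^{-1}b^{-1}c$, $r_2 = ba^{-1}b^{-1}ca$, $r_3 = a^{-1}b^{-1}cab$, $r_4 = b^{-1}caba^{-1}$, $r_5 = caba^{-1}b^{-1}$. A piece is an initial subword of some element of $R$. Then every nontrivial cyclically reduced word $w \in N$ contains (as a subword) a piece of length $4$. *)

theory Defs
  imports Main "HOL-Library.Sublist"
begin

text \<open>Words over the generators a, b, c of the free group F_3 and their inverses.
  A letter is a pair (generator, sign); sign True means the generator itself,
  False its inverse.\<close>

datatype gen = GA | GB | GC

type_synonym letter = "gen \<times> bool"
type_synonym word = "letter list"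

definition inv_letter :: "letter \<Rightarrow> letter" where
  "inv_letter x = (fst x, \<not> snd x)"

definition inv_word :: "word \<Rightarrow> word" where
  "inv_word w = rev (map inv_letter w)"

definition a :: letter where "a = (GA, True)"
definition b :: letter where "b = (GB, True)"
definition c :: letter where "c = (GC, True)"
definition a' :: letter where "a' = (GA, False)"
definition b' :: letter where "b' = (GB, False)"

inductive reduce1 :: "word \<Rightarrow> word \<Rightarrow> bool" where
  "reduce1 (xs @ [x, inv_letter x] @ ys) (xs @ ys)"

definition free_eq :: "word \<Rightarrow> word \<Rightarrow> bool" where
  "free_eq = (sup reduce1 (reduce1\<inverse>\<inverse>))\<^sup>*\<^sup>*"

definition reduced :: "word \<Rightarrow> bool" where
  "reduced w \<longleftrightarrow> (\<forall>i. Suc i < length w \<longrightarrow> w ! Suc i \<noteq> inv_letter (w ! i))"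

definition cyclically_reduced :: "word \<Rightarrow> bool" where
  "cyclically_reduced w \<longleftrightarrow> reduced w \<and> (w \<noteq> [] \<longrightarrow> last w \<noteq> inv_letter (hd w))"

definition rel :: word where "rel = [a, b, a', b', c]"

inductive_set conj_prods :: "word set" where
  nil: "[] \<in> conj_prods"
| pos: "u \<in> conj_prods \<Longrightarrow> u @ g @ rel @ inv_word g \<in> conj_prods"
| neg: "u \<in> conj_prods \<Longrightarrow> u @ g @ inv_word rel @ inv_word g \<in> conj_prods"

definition in_N :: "word \<Rightarrow> bool" where
  "in_N w \<longleftrightarrow> (\<exists>u \<in> conj_prods. free_eq w u)"

definition r1 :: word where "r1 = [a, b, a', b', c]"
definition r2 :: word where "r2 = [b, a', b', c, a]"
definition r3 :: word where "r3 = [a', b', c, a, b]"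
definition r4 :: word where "r4 = [b', c, a, b, a']"
definition r5 :: word where "r5 = [c, a, b, a', b']"

definition R :: "word set" where
  "R = {r1, r2, r3, r4, r5} \<union> inv_word ` {r1, r2, r3, r4, r5}"

definition piece :: "word \<Rightarrow> bool" where
  "piece p \<longleftrightarrow> (\<exists>s \<in> R. prefix p s)"

end

theory Submission
  imports Defs
begin

fun cancel :: "letter \<Rightarrow> word \<Rightarrow> word" where
  "cancel x [] = [x]"
| "cancel x (y # ys) = (if y = inv_letter x then ys else x # y # ys)"

definition red :: "word \<Rightarrow> word" where "red w = foldr cancel w []"

definition phl :: "letter \<Rightarrow> word" where
  "phl x = (if x = (GC, True) then [(GB, True), (GA, True), (GB, False), (GA, False)]
            else if x = (GC, False) then [(GA, True), (GB, True), (GA, False), (GB, False)] else [x])"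

definition ph :: "word \<Rightarrow> word" where "ph w = concat (map phl w)"

definition F3 :: "letter \<Rightarrow> letter \<Rightarrow> letter \<Rightarrow> word" where
  "F3 x y z = (case x of (g0, s0) \<Rightarrow> case y of (g1, s1) \<Rightarrow> case z of (g2, s2) \<Rightarrow>
   (case g0 of GA \<Rightarrow> (if s0 then (case g1 of GA \<Rightarrow> (if s1 then (case g2 of GA \<Rightarrow> (if s2 then [(GA, True), (GA, True), (GA, True)] else []) | GB \<Rightarrow> (if s2 then [(GA, True), (GA, True), (GB, True)] else [(GA, True), (GA, True)]) | GC \<Rightarrow> (if s2 then [(GA, True), (GA, True), (GB, True), (GA, True)] else [(GA, True), (GA, True), (GA, True), (GB, True)])) else (case g2 of GA \<Rightarrow> (if s2 then [] else []) | GB \<Rightarrow> (if s2 then [] else []) | GC \<Rightarrow> (if s2 then [] else []))) | GB \<Rightarrow> (if s1 then (case g2 of GA \<Rightarrow> (if s2 then [(GA, True), (GB, True), (GA, True)] else [(GA, True), (GB, True)]) | GB \<Rightarrow> (if s2 then [(GA, True), (GB, True), (GB, True)] else []) | GC \<Rightarrow> (if s2 then [(GA, True), (GB, True), (GB, True), (GA, True)] else [(GA, True), (GB, True), (GA, True), (GB, True)])) else (case g2 of GA \<Rightarrow> (if s2 then [(GA, True), (GB, False), (GA, True)] else [(GA, True), (GB, False)]) | GB \<Rightarrow> (if s2 then [] else [(GA, True), (GB, False)]) | GC \<Rightarrow> (if s2 then [(GA, True), (GA, True)] else [(GA, True), (GB, False), (GA, True), (GB, True)]))) | GC \<Rightarrow>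 (if s1 then (case g2 of GA \<Rightarrow> (if s2 then [(GA, True), (GB, True), (GA, True)] else [(GA, True), (GB, True), (GA, True), (GB, False), (GA, False)]) | GB \<Rightarrow> (if s2 then [(GA, True), (GB, True), (GA, True), (GB, False), (GA, False), (GB, True)] else [(GA, True), (GB, True), (GA, True), (GB, False)]) | GC \<Rightarrow> (if s2 then [(GA, True), (GB, True), (GA, True), (GB, False), (GA, False), (GB, True), (GA, True)] else [])) else (case g2 of GA \<Rightarrow> (if s2 then [(GA, True), (GA, True), (GB, True), (GA, False), (GB, False), (GA, True)] else [(GA, True), (GA, True), (GB, True), (GA, False)]) | GB \<Rightarrow> (if s2 then [(GA, True), (GA, True), (GB, True)] else [(GA, True), (GA, True), (GB, True), (GA, False), (GB, False)]) | GC \<Rightarrow> (if s2 then [] else [(GA, True), (GA, True), (GB, True), (GA, False), (GB, False), (GA, True), (GB, True)])))) else (case g1 of GA \<Rightarrow> (if s1 then (case g2 of GA \<Rightarrow> (if s2 then [] else []) | GB \<Rightarrow> (if s2 then [] else []) | GC \<Rightarrow> (if s2 then [] else [])) else (case g2 of GA \<Rightarrow> (if s2 then [] else [(GA, False), (GA, False)]) | GB \<Rightarrow> (if s2 then [(GA, False), (GA, False), (GB, True)] else [(GA, False)]) | GC \<Rightarrow> (if s2 then [(GA, False), (GA, False), (GB, True), (GA, True)] else [(GA, False), (GB, True)]))) | GB \<Rightarrow> (if s1 then (case g2 of GA \<Rightarrow> (if s2 then [(GA, False), (GB, True), (GA, True)] else [(GA, False), (GB, True)]) | GB \<Rightarrow>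 (if s2 then [(GA, False), (GB, True), (GB, True)] else []) | GC \<Rightarrow> (if s2 then [(GA, False), (GB, True), (GB, True), (GA, True)] else [(GA, False), (GB, True), (GA, True), (GB, True)])) else (case g2 of GA \<Rightarrow> (if s2 then [(GA, False), (GB, False), (GA, True)] else [(GA, False)]) | GB \<Rightarrow> (if s2 then [] else [(GA, False), (GB, False)]) | GC \<Rightarrow> (if s2 then [(GB, False)] else [(GA, False), (GB, False), (GA, True), (GB, True)]))) | GC \<Rightarrow> (if s1 then (case g2 of GA \<Rightarrow> (if s2 then [(GA, False), (GB, True), (GA, True)] else [(GA, False), (GB, True), (GA, True), (GB, False), (GA, False)]) | GB \<Rightarrow> (if s2 then [(GA, False), (GB, True), (GA, True), (GB, False), (GA, False), (GB, True)] else [(GA, False), (GB, True), (GA, True), (GB, False)]) | GC \<Rightarrow> (if s2 then [(GA, False), (GB, True), (GA, True), (GB, False), (GA, False), (GB, True), (GA, True)] else [])) else (case g2 of GA \<Rightarrow> (if s2 then [(GB, True), (GA, False), (GB, False), (GA, True)] else [(GB, True), (GA, False)]) | GB \<Rightarrow> (if s2 then [(GB, True)] else [(GB, True), (GA, False), (GB, False)]) | GC \<Rightarrow> (if s2 then [] else [(GB, True), (GA, False), (GB, False), (GA, True), (GB, True)]))))) | GB \<Rightarrow> (if s0 then (case g1 of GA \<Rightarrow> (if s1 then (case g2 of GA \<Rightarrow> (if s2 then [(GB, True), (GA, True), (GA, True)] else []) | GB \<Rightarrow> (if s2 then [(GB, True), (GA, True), (GB, True)] else [(GB, True), (GA, True)])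 | GC \<Rightarrow> (if s2 then [(GB, True), (GA, True), (GB, True), (GA, True)] else [(GB, True), (GA, True), (GA, True), (GB, True)])) else (case g2 of GA \<Rightarrow> (if s2 then [] else [(GB, True), (GA, False)]) | GB \<Rightarrow> (if s2 then [(GB, True), (GA, False), (GB, True)] else [(GB, True), (GA, False)]) | GC \<Rightarrow> (if s2 then [(GB, True), (GA, False), (GB, True), (GA, True)] else [(GB, True), (GB, True)]))) | GB \<Rightarrow> (if s1 then (case g2 of GA \<Rightarrow> (if s2 then [(GB, True), (GB, True), (GA, True)] else [(GB, True), (GB, True)]) | GB \<Rightarrow> (if s2 then [(GB, True), (GB, True), (GB, True)] else []) | GC \<Rightarrow> (if s2 then [(GB, True), (GB, True), (GB, True), (GA, True)] else [(GB, True), (GB, True), (GA, True), (GB, True)])) else (case g2 of GA \<Rightarrow> (if s2 then [] else []) | GB \<Rightarrow> (if s2 then [] else []) | GC \<Rightarrow> (if s2 then [] else []))) | GC \<Rightarrow> (if s1 then (case g2 of GA \<Rightarrow> (if s2 then [(GB, True), (GB, True), (GA, True)] else [(GB, True), (GB, True), (GA, True), (GB, False), (GA, False)]) | GB \<Rightarrow> (if s2 then [(GB, True), (GB, True), (GA, True), (GB, False), (GA, False), (GB, True)] else [(GB, True), (GB, True), (GA, True), (GB, False)]) | GC \<Rightarrow> (if s2 then [(GB, True), (GB, True), (GA, True), (GB, False), (GA, False), (GB, True), (GA, True)] else [])) else (case g2 of GA \<Rightarrow> (if s2 then [(GB, True), (GA, True), (GB, True), (GA, False), (GB, False), (GA,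 True)] else [(GB, True), (GA, True), (GB, True), (GA, False)]) | GB \<Rightarrow> (if s2 then [(GB, True), (GA, True), (GB, True)] else [(GB, True), (GA, True), (GB, True), (GA, False), (GB, False)]) | GC \<Rightarrow> (if s2 then [] else [(GB, True), (GA, True), (GB, True), (GA, False), (GB, False), (GA, True), (GB, True)])))) else (case g1 of GA \<Rightarrow> (if s1 then (case g2 of GA \<Rightarrow> (if s2 then [(GB, False), (GA, True), (GA, True)] else []) | GB \<Rightarrow> (if s2 then [(GB, False), (GA, True), (GB, True)] else [(GB, False), (GA, True)]) | GC \<Rightarrow> (if s2 then [(GB, False), (GA, True), (GB, True), (GA, True)] else [(GB, False), (GA, True), (GA, True), (GB, True)])) else (case g2 of GA \<Rightarrow> (if s2 then [] else [(GB, False), (GA, False)]) | GB \<Rightarrow> (if s2 then [(GB, False), (GA, False), (GB, True)] else [(GB, False)]) | GC \<Rightarrow> (if s2 then [(GB, False), (GA, False), (GB, True), (GA, True)] else [(GA, False)]))) | GB \<Rightarrow> (if s1 then (case g2 of GA \<Rightarrow> (if s2 then [] else []) | GB \<Rightarrow> (if s2 then [] else []) | GC \<Rightarrow> (if s2 then [] else [])) else (case g2 of GA \<Rightarrow> (if s2 then [(GB, False), (GB, False), (GA, True)] else [(GB, False)]) | GB \<Rightarrow> (if s2 then [] else [(GB, False), (GB, False)]) | GC \<Rightarrow> (if s2 then [(GB, False), (GA, True)] else [(GB, False), (GB, False), (GA, True), (GB, True)]))) | GC \<Rightarrow> (if s1 then (case g2 of GA \<Rightarrow> (if s2 then [(GA,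 True)] else [(GA, True), (GB, False), (GA, False)]) | GB \<Rightarrow> (if s2 then [(GA, True), (GB, False), (GA, False), (GB, True)] else [(GA, True), (GB, False)]) | GC \<Rightarrow> (if s2 then [(GA, True), (GB, False), (GA, False), (GB, True), (GA, True)] else [])) else (case g2 of GA \<Rightarrow> (if s2 then [(GB, False), (GA, True), (GB, True), (GA, False), (GB, False), (GA, True)] else [(GB, False), (GA, True), (GB, True), (GA, False)]) | GB \<Rightarrow> (if s2 then [(GB, False), (GA, True), (GB, True)] else [(GB, False), (GA, True), (GB, True), (GA, False), (GB, False)]) | GC \<Rightarrow> (if s2 then [] else [(GB, False), (GA, True), (GB, True), (GA, False), (GB, False), (GA, True), (GB, True)]))))) | GC \<Rightarrow> (if s0 then (case g1 of GA \<Rightarrow> (if s1 then (case g2 of GA \<Rightarrow> (if s2 then [(GB, True), (GA, True), (GB, False), (GA, True)] else []) | GB \<Rightarrow> (if s2 then [(GB, True), (GA, True)] else [(GB, True), (GA, True), (GB, False)]) | GC \<Rightarrow> (if s2 then [(GB, True), (GA, True), (GA, True)] else [(GB, True), (GA, True), (GB, False), (GA, True), (GB, True)])) else (case g2 of GA \<Rightarrow> (if s2 then [] else [(GB, True), (GA, True), (GB, False), (GA, False), (GA, False)]) | GB \<Rightarrow> (if s2 then [(GB, True), (GA, True), (GB, False), (GA, False), (GA, False), (GB, True)] else [(GB, True), (GA, True), (GB, False), (GA, False)]) | GC \<Rightarrow> (if s2 then [(GB, True), (GA, True), (GB, False), (GA, False), (GA, False), (GB, True), (GA, True)] else [(GB,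 True), (GA, True), (GB, False), (GA, False), (GB, True)]))) | GB \<Rightarrow> (if s1 then (case g2 of GA \<Rightarrow> (if s2 then [(GB, True), (GA, True), (GB, False), (GA, False), (GB, True), (GA, True)] else [(GB, True), (GA, True), (GB, False), (GA, False), (GB, True)]) | GB \<Rightarrow> (if s2 then [(GB, True), (GA, True), (GB, False), (GA, False), (GB, True), (GB, True)] else []) | GC \<Rightarrow> (if s2 then [(GB, True), (GA, True), (GB, False), (GA, False), (GB, True), (GB, True), (GA, True)] else [(GB, True), (GA, True), (GB, False), (GA, False), (GB, True), (GA, True), (GB, True)])) else (case g2 of GA \<Rightarrow> (if s2 then [(GB, True), (GA, True), (GB, False), (GA, False), (GB, False), (GA, True)] else [(GB, True), (GA, True), (GB, False), (GA, False)]) | GB \<Rightarrow> (if s2 then [] else [(GB, True), (GA, True), (GB, False), (GA, False), (GB, False)]) | GC \<Rightarrow> (if s2 then [(GB, True), (GA, True), (GB, False)] else [(GB, True), (GA, True), (GB, False), (GA, False), (GB, False), (GA, True), (GB, True)]))) | GC \<Rightarrow> (if s1 then (case g2 of GA \<Rightarrow> (if s2 then [(GB, True), (GA, True), (GB, False), (GA, False), (GB, True), (GA, True)] else [(GB, True), (GA, True), (GB, False), (GA, False), (GB, True), (GA, True), (GB, False), (GA, False)]) | GB \<Rightarrow> (if s2 then [(GB, True), (GA, True), (GB, False), (GA, False), (GB, True), (GA, True), (GB, False), (GA, False), (GB, True)] else [(GB, True), (GA, True), (GB, False), (GA, False), (GB, True), (GA, True), (GB, False)]) | GC \<Rightarrow>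 (if s2 then [(GB, True), (GA, True), (GB, False), (GA, False), (GB, True), (GA, True), (GB, False), (GA, False), (GB, True), (GA, True)] else [])) else (case g2 of GA \<Rightarrow> (if s2 then [] else []) | GB \<Rightarrow> (if s2 then [] else []) | GC \<Rightarrow> (if s2 then [] else [])))) else (case g1 of GA \<Rightarrow> (if s1 then (case g2 of GA \<Rightarrow> (if s2 then [(GA, True), (GB, True), (GA, False), (GB, False), (GA, True), (GA, True)] else []) | GB \<Rightarrow> (if s2 then [(GA, True), (GB, True), (GA, False), (GB, False), (GA, True), (GB, True)] else [(GA, True), (GB, True), (GA, False), (GB, False), (GA, True)]) | GC \<Rightarrow> (if s2 then [(GA, True), (GB, True), (GA, False), (GB, False), (GA, True), (GB, True), (GA, True)] else [(GA, True), (GB, True), (GA, False), (GB, False), (GA, True), (GA, True), (GB, True)])) else (case g2 of GA \<Rightarrow> (if s2 then [] else [(GA, True), (GB, True), (GA, False), (GB, False), (GA, False)]) | GB \<Rightarrow> (if s2 then [(GA, True), (GB, True), (GA, False), (GB, False), (GA, False), (GB, True)] else [(GA, True), (GB, True), (GA, False), (GB, False)]) | GC \<Rightarrow> (if s2 then [(GA, True), (GB, True), (GA, False), (GB, False), (GA, False), (GB, True), (GA, True)] else [(GA, True), (GB, True), (GA, False)]))) | GB \<Rightarrow> (if s1 then (case g2 of GA \<Rightarrow> (if s2 then [(GA, True), (GB, True)] else [(GA, True), (GB, True), (GA, False)]) | GB \<Rightarrow> (if s2 then [(GA, True), (GB, True), (GA, False), (GB, True)] else []) | GC \<Rightarrow>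 (if s2 then [(GA, True), (GB, True), (GA, False), (GB, True), (GA, True)] else [(GA, True), (GB, True), (GB, True)])) else (case g2 of GA \<Rightarrow> (if s2 then [(GA, True), (GB, True), (GA, False), (GB, False), (GB, False), (GA, True)] else [(GA, True), (GB, True), (GA, False), (GB, False)]) | GB \<Rightarrow> (if s2 then [] else [(GA, True), (GB, True), (GA, False), (GB, False), (GB, False)]) | GC \<Rightarrow> (if s2 then [(GA, True), (GB, True), (GA, False), (GB, False), (GA, True)] else [(GA, True), (GB, True), (GA, False), (GB, False), (GB, False), (GA, True), (GB, True)]))) | GC \<Rightarrow> (if s1 then (case g2 of GA \<Rightarrow> (if s2 then [] else []) | GB \<Rightarrow> (if s2 then [] else []) | GC \<Rightarrow> (if s2 then [] else [])) else (case g2 of GA \<Rightarrow> (if s2 then [(GA, True), (GB, True), (GA, False), (GB, False), (GA, True), (GB, True), (GA, False), (GB, False), (GA, True)] else [(GA, True), (GB, True), (GA, False), (GB, False), (GA, True), (GB, True), (GA, False)]) | GB \<Rightarrow> (if s2 then [(GA, True), (GB, True), (GA, False), (GB, False), (GA, True), (GB, True)] else [(GA, True), (GB, True), (GA, False), (GB, False), (GA, True), (GB, True), (GA, False), (GB, False)]) | GC \<Rightarrow> (if s2 then [] else [(GA, True), (GB, True), (GA, False), (GB, False), (GA, True), (GB, True), (GA, False), (GB, False), (GA, True), (GB, True)])))))))"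

definition H3 :: "letter \<Rightarrow> letter \<Rightarrow> letter \<Rightarrow> letter list" where
  "H3 x y z = (case x of (g0, s0) \<Rightarrow> case y of (g1, s1) \<Rightarrow> case z of (g2, s2) \<Rightarrow>
   (case g0 of GA \<Rightarrow> (if s0 then (case g1 of GA \<Rightarrow> (if s1 then (case g2 of GA \<Rightarrow> (if s2 then [(GB, False), (GA, True), (GB, True)] else []) | GB \<Rightarrow> (if s2 then [(GA, False), (GA, True), (GB, True)] else [(GB, False), (GA, True)]) | GC \<Rightarrow> (if s2 then [(GB, False), (GA, True), (GB, True)] else [(GA, False), (GA, True), (GB, True)])) else (case g2 of GA \<Rightarrow> (if s2 then [] else []) | GB \<Rightarrow> (if s2 then [] else []) | GC \<Rightarrow> (if s2 then [] else []))) | GB \<Rightarrow> (if s1 then (case g2 of GA \<Rightarrow> (if s2 then [(GB, False), (GA, True), (GB, True)] else [(GA, False), (GB, True)]) | GB \<Rightarrow> (if s2 then [(GA, False), (GA, True), (GB, True)] else []) | GC \<Rightarrow> (if s2 then [(GB, False), (GA, True), (GB, True)] else [(GA, False), (GA, True), (GB, True)])) else (case g2 of GA \<Rightarrow> (if s2 then [(GB, False), (GA, True), (GB, True)] else [(GA, False), (GB, False)]) | GB \<Rightarrow> (if s2 then [] else [(GA, False), (GB, False), (GA, True)]) | GC \<Rightarrow> (if s2 then [(GB, False), (GA, True)] else [(GA, False), (GA, True), (GB, True)]))) | GC \<Rightarrow> (if s1 then (case g2 of GA \<Rightarrow> (if s2 then [(GB, False), (GA, True), (GB, True)] else [(GA,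 False), (GB, False), (GB, True)]) | GB \<Rightarrow> (if s2 then [(GA, False), (GA, True), (GB, True)] else [(GA, False), (GB, False), (GA, True)]) | GC \<Rightarrow> (if s2 then [(GB, False), (GA, True), (GB, True)] else [])) else (case g2 of GA \<Rightarrow> (if s2 then [(GB, False), (GA, True), (GB, True)] else [(GA, False), (GB, False), (GB, True)]) | GB \<Rightarrow> (if s2 then [(GA, False), (GA, True), (GB, True)] else [(GA, False), (GB, False), (GA, True)]) | GC \<Rightarrow> (if s2 then [] else [(GA, False), (GA, True), (GB, True)])))) else (case g1 of GA \<Rightarrow> (if s1 then (case g2 of GA \<Rightarrow> (if s2 then [] else []) | GB \<Rightarrow> (if s2 then [] else []) | GC \<Rightarrow> (if s2 then [] else [])) else (case g2 of GA \<Rightarrow> (if s2 then [] else [(GA, False), (GB, False), (GB, True)]) | GB \<Rightarrow> (if s2 then [(GA, False), (GA, True), (GB, True)] else [(GA, False), (GB, False)]) | GC \<Rightarrow> (if s2 then [(GB, False), (GA, True), (GB, True)] else [(GA, False), (GB, True)]))) | GB \<Rightarrow> (if s1 then (case g2 of GA \<Rightarrow> (if s2 then [(GB, False), (GA, True), (GB, True)] else [(GA, False), (GB, True)]) | GB \<Rightarrow> (if s2 then [(GA, False), (GA, True), (GB, True)] else []) | GC \<Rightarrow> (if s2 then [(GB, False), (GA, True), (GB, True)] else [(GA, False), (GA, True), (GB, True)])) else (case g2 of GA \<Rightarrow> (if s2 then [(GB, False), (GA, True), (GB, True)] else [(GA, False), (GB, False)]) | GB \<Rightarrow> (if s2 then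 [] else [(GA, False), (GB, False), (GA, True)]) | GC \<Rightarrow> (if s2 then [(GA, False), (GB, False), (GA, True)] else [(GA, False), (GA, True), (GB, True)]))) | GC \<Rightarrow> (if s1 then (case g2 of GA \<Rightarrow> (if s2 then [(GB, False), (GA, True), (GB, True)] else [(GA, False), (GB, False), (GB, True)]) | GB \<Rightarrow> (if s2 then [(GA, False), (GA, True), (GB, True)] else [(GA, False), (GB, False), (GA, True)]) | GC \<Rightarrow> (if s2 then [(GB, False), (GA, True), (GB, True)] else [])) else (case g2 of GA \<Rightarrow> (if s2 then [(GB, False), (GA, True), (GB, True)] else [(GA, False), (GB, False), (GB, True)]) | GB \<Rightarrow> (if s2 then [(GA, False), (GB, True)] else [(GA, False), (GB, False), (GA, True)]) | GC \<Rightarrow> (if s2 then [] else [(GA, False), (GA, True), (GB, True)]))))) | GB \<Rightarrow> (if s0 then (case g1 of GA \<Rightarrow> (if s1 then (case g2 of GA \<Rightarrow> (if s2 then [(GB, False), (GA, True), (GB, True)] else []) | GB \<Rightarrow> (if s2 then [(GA, False), (GA, True), (GB, True)] else [(GB, False), (GA, True)]) | GC \<Rightarrow> (if s2 then [(GB, False), (GA, True), (GB, True)] else [(GA, False), (GA, True), (GB, True)])) else (case g2 of GA \<Rightarrow> (if s2 then [] else [(GA, False), (GB, False), (GB, True)]) | GB \<Rightarrow> (if s2 then [(GA, False), (GA, True), (GB, True)] else [(GA, False), (GB, False)]) | GC \<Rightarrow> (if s2 then [(GB, False), (GA, True), (GB, True)] else [(GA, False), (GB, True)]))) | GB \<Rightarrow>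 (if s1 then (case g2 of GA \<Rightarrow> (if s2 then [(GB, False), (GA, True), (GB, True)] else [(GA, False), (GB, True)]) | GB \<Rightarrow> (if s2 then [(GA, False), (GA, True), (GB, True)] else []) | GC \<Rightarrow> (if s2 then [(GB, False), (GA, True), (GB, True)] else [(GA, False), (GA, True), (GB, True)])) else (case g2 of GA \<Rightarrow> (if s2 then [] else []) | GB \<Rightarrow> (if s2 then [] else []) | GC \<Rightarrow> (if s2 then [] else []))) | GC \<Rightarrow> (if s1 then (case g2 of GA \<Rightarrow> (if s2 then [(GB, False), (GA, True), (GB, True)] else [(GA, False), (GB, False), (GB, True)]) | GB \<Rightarrow> (if s2 then [(GA, False), (GA, True), (GB, True)] else [(GA, False), (GB, False), (GA, True)]) | GC \<Rightarrow> (if s2 then [(GB, False), (GA, True), (GB, True)] else [])) else (case g2 of GA \<Rightarrow> (if s2 then [(GB, False), (GA, True), (GB, True)] else [(GA, False), (GB, False), (GB, True)]) | GB \<Rightarrow> (if s2 then [(GA, False), (GA, True), (GB, True)] else [(GA, False), (GB, False), (GA, True)]) | GC \<Rightarrow> (if s2 then [] else [(GA, False), (GA, True), (GB, True)])))) else (case g1 of GA \<Rightarrow> (if s1 then (case g2 of GA \<Rightarrow> (if s2 then [(GB, False), (GA, True), (GB, True)] else []) | GB \<Rightarrow> (if s2 then [(GA, False), (GA, True), (GB, True)] else [(GB, False), (GA, True)]) | GC \<Rightarrow> (if s2 then [(GB, False), (GA, True), (GB, True)] else [(GA, False), (GA, True), (GB, True)])) else (case g2 of GA \<Rightarrow> (if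 s2 then [] else [(GA, False), (GB, False), (GB, True)]) | GB \<Rightarrow> (if s2 then [(GA, False), (GA, True), (GB, True)] else [(GA, False), (GB, False)]) | GC \<Rightarrow> (if s2 then [(GB, False), (GA, True), (GB, True)] else [(GA, False), (GB, False), (GB, True)]))) | GB \<Rightarrow> (if s1 then (case g2 of GA \<Rightarrow> (if s2 then [] else []) | GB \<Rightarrow> (if s2 then [] else []) | GC \<Rightarrow> (if s2 then [] else [])) else (case g2 of GA \<Rightarrow> (if s2 then [(GB, False), (GA, True), (GB, True)] else [(GA, False), (GB, False)]) | GB \<Rightarrow> (if s2 then [] else [(GA, False), (GB, False), (GA, True)]) | GC \<Rightarrow> (if s2 then [(GB, False), (GA, True)] else [(GA, False), (GA, True), (GB, True)]))) | GC \<Rightarrow> (if s1 then (case g2 of GA \<Rightarrow> (if s2 then [(GB, False), (GA, True)] else [(GA, False), (GB, False), (GB, True)]) | GB \<Rightarrow> (if s2 then [(GA, False), (GA, True), (GB, True)] else [(GA, False), (GB, False), (GA, True)]) | GC \<Rightarrow> (if s2 then [(GB, False), (GA, True), (GB, True)] else [])) else (case g2 of GA \<Rightarrow> (if s2 then [(GB, False), (GA, True), (GB, True)] else [(GA, False), (GB, False), (GB, True)]) | GB \<Rightarrow> (if s2 then [(GA, False), (GA, True), (GB, True)] else [(GA, False), (GB, False), (GA, True)]) | GC \<Rightarrow> (if s2 then [] else [(GA, False), (GA, True), (GB, True)]))))) | GC \<Rightarrow> (if s0 then (case g1 of GA \<Rightarrow> (if s1 then (case g2 of GA \<Rightarrow>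 (if s2 then [(GB, False), (GA, True), (GB, True)] else []) | GB \<Rightarrow> (if s2 then [(GA, True), (GB, True)] else [(GB, False), (GA, True)]) | GC \<Rightarrow> (if s2 then [(GB, False), (GA, True), (GB, True)] else [(GA, False), (GA, True), (GB, True)])) else (case g2 of GA \<Rightarrow> (if s2 then [] else [(GA, False), (GB, False), (GB, True)]) | GB \<Rightarrow> (if s2 then [(GA, False), (GA, True), (GB, True)] else [(GA, False), (GB, False)]) | GC \<Rightarrow> (if s2 then [(GB, False), (GA, True), (GB, True)] else [(GA, False), (GB, True)]))) | GB \<Rightarrow> (if s1 then (case g2 of GA \<Rightarrow> (if s2 then [(GB, False), (GA, True), (GB, True)] else [(GA, False), (GB, True)]) | GB \<Rightarrow> (if s2 then [(GA, False), (GA, True), (GB, True)] else []) | GC \<Rightarrow> (if s2 then [(GB, False), (GA, True), (GB, True)] else [(GA, False), (GA, True), (GB, True)])) else (case g2 of GA \<Rightarrow> (if s2 then [(GB, False), (GA, True), (GB, True)] else [(GA, False), (GB, False)]) | GB \<Rightarrow> (if s2 then [] else [(GA, False), (GB, False), (GA, True)]) | GC \<Rightarrow> (if s2 then [(GB, False), (GA, True)] else [(GA, False), (GA, True), (GB, True)]))) | GC \<Rightarrow> (if s1 then (case g2 of GA \<Rightarrow> (if s2 then [(GB, False), (GA, True), (GB, True)] else [(GA, False), (GB, False), (GB, True)]) | GB \<Rightarrow> (if s2 then [(GA, False), (GA, True), (GB, True)] else [(GA, False), (GB, False), (GA, True)]) | GC \<Rightarrow> (if s2 then [(GB, False), (GA,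 True), (GB, True)] else [])) else (case g2 of GA \<Rightarrow> (if s2 then [] else []) | GB \<Rightarrow> (if s2 then [] else []) | GC \<Rightarrow> (if s2 then [] else [])))) else (case g1 of GA \<Rightarrow> (if s1 then (case g2 of GA \<Rightarrow> (if s2 then [(GB, False), (GA, True), (GB, True)] else []) | GB \<Rightarrow> (if s2 then [(GA, False), (GA, True), (GB, True)] else [(GB, False), (GA, True)]) | GC \<Rightarrow> (if s2 then [(GB, False), (GA, True), (GB, True)] else [(GA, False), (GA, True), (GB, True)])) else (case g2 of GA \<Rightarrow> (if s2 then [] else [(GA, False), (GB, False), (GB, True)]) | GB \<Rightarrow> (if s2 then [(GA, False), (GA, True), (GB, True)] else [(GA, False), (GB, False)]) | GC \<Rightarrow> (if s2 then [(GB, False), (GA, True), (GB, True)] else [(GA, False), (GB, True)]))) | GB \<Rightarrow> (if s1 then (case g2 of GA \<Rightarrow> (if s2 then [(GA, True), (GB, True)] else [(GA, False), (GB, True)]) | GB \<Rightarrow> (if s2 then [(GA, False), (GA, True), (GB, True)] else []) | GC \<Rightarrow> (if s2 then [(GB, False), (GA, True), (GB, True)] else [(GA, False), (GA, True), (GB, True)])) else (case g2 of GA \<Rightarrow> (if s2 then [(GB, False), (GA, True), (GB, True)] else [(GA, False), (GB, False)]) | GB \<Rightarrow> (if s2 then [] else [(GA, False), (GB, False), (GA, True)]) | GC \<Rightarrow> (if s2 then [(GB, False), (GA, True)] else [(GA, False), (GA, True), (GB, True)]))) | GC \<Rightarrow> (if s1 then (case g2 of GA \<Rightarrow> (if s2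 then [] else []) | GB \<Rightarrow> (if s2 then [] else []) | GC \<Rightarrow> (if s2 then [] else [])) else (case g2 of GA \<Rightarrow> (if s2 then [(GB, False), (GA, True), (GB, True)] else [(GA, False), (GB, False), (GB, True)]) | GB \<Rightarrow> (if s2 then [(GA, False), (GA, True), (GB, True)] else [(GA, False), (GB, False), (GA, True)]) | GC \<Rightarrow> (if s2 then [] else [(GA, False), (GA, True), (GB, True)])))))))"

fun F :: "word \<Rightarrow> word" where
  "F [x, y, z] = F3 x y z"
| "F v = red (ph v)"

fun H :: "word \<Rightarrow> letter list" where
  "H [x, y, z] = H3 x y z"
| "H v = []"

fun symf :: "word \<Rightarrow> word \<Rightarrow> letter list \<Rightarrow> word option" where
  "symf [] t hs = Some t"
| "symf (y # p) t hs = (case symf p t hs of None \<Rightarrow> None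
     | Some r \<Rightarrow> (case r of [] \<Rightarrow> (if inv_letter y \<in> set hs then None else Some [y])
                         | _ \<Rightarrow> Some (cancel y r)))"

definition letters :: "letter list" where
  "letters = [(GA, True), (GA, False), (GB, True), (GB, False), (GC, True), (GC, False)]"

definition pieces4 :: "word list" where
  "pieces4 = [[(GA, True), (GB, True), (GA, False), (GB, False)], [(GB, True), (GA, False), (GB, False), (GC, True)], [(GA, False), (GB, False), (GC, True), (GA, True)], [(GB, False), (GC, True), (GA, True), (GB, True)], [(GC, True), (GA, True), (GB, True), (GA, False)], [(GC, False), (GB, True), (GA, True), (GB, False)], [(GA, False), (GC, False), (GB, True), (GA, True)], [(GB, False), (GA, False), (GC, False), (GB, True)], [(GA, True), (GB, False), (GA, False), (GC, False)], [(GB, True), (GA, True), (GB, False), (GA, False)]]"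

definition okstart :: "letter \<Rightarrow> word \<Rightarrow> bool" where
  "okstart x v = ((v = [] \<or> hd v \<noteq> inv_letter x) \<and> take 4 (x # v) \<notin> set pieces4)"

fun crec :: "(word \<Rightarrow> bool) \<Rightarrow> nat \<Rightarrow> word \<Rightarrow> bool" where
  "crec P 0 v = P v"
| "crec P (Suc n) v = list_all (\<lambda>x. \<not> okstart x v \<or> crec P n (x # v)) letters"

definition Pstep :: "word \<Rightarrow> bool" where
  "Pstep u = (case u of [] \<Rightarrow> True | x # v \<Rightarrow>
     (case symf (phl x) (F v) (H v) of None \<Rightarrow> False
      | Some r \<Rightarrow> take (length (F (take 3 u))) r = F (take 3 u) \<and>
          (let rest = drop (length (F (take 3 u))) r in
             (rest = [] \<longrightarrow> set (H v) \<subseteq> set (H (take 3 u))) \<and>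
             (rest \<noteq> [] \<longrightarrow> hd rest \<in> set (H (take 3 u))))))"

definition Pbase :: "word \<Rightarrow> bool" where
  "Pbase u = (F u \<noteq> [] \<and> take (length (F u)) (red (ph u)) = F u \<and>
     (let rest = drop (length (F u)) (red (ph u)) in rest \<noteq> [] \<longrightarrow> hd rest \<in> set (H u)))"

lemma crec_base1: "crec Pbase 1 []" by code_simp
lemma crec_base2: "crec Pbase 2 []" by code_simp
lemma crec_base3: "crec Pbase 3 []" by code_simp
lemma crec_step: "crec Pstep 4 []" by code_simp

section \<open>Free reduction\<close>

lemma inv_inv[simp]: "inv_letter (inv_letter x) = x"
  by (simp add: inv_letter_def)

lemma inv_neq[simp]: "inv_letter x \<noteq> x"
  by (cases x) (simp add: inv_letter_def)

lemma reduced_Nil[simp]: "reduced []"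
  by (simp add: reduced_def)

lemma reduced_Cons: "reduced (x # ys) \<longleftrightarrow> (ys = [] \<or> hd ys \<noteq> inv_letter x) \<and> reduced ys"
proof
  assume r: "reduced (x # ys)"
  have 1: "ys = [] \<or> hd ys \<noteq> inv_letter x"
  proof (cases ys)
    case (Cons y zs)
    with r show ?thesis unfolding reduced_def by (metis length_Cons list.sel(1) nth_Cons_0 nth_Cons_Suc zero_less_Suc Suc_less_eq)
  qed simp
  have "reduced ys" unfolding reduced_def
  proof (intro allI impI)
    fix i assume "Suc i < length ys"
    with r have "(x # ys) ! Suc (Suc i) \<noteq> inv_letter ((x # ys) ! Suc i)"
      unfolding reduced_def by (metis Suc_less_eq length_Cons)
    then show "ys ! Suc i \<noteq> inv_letter (ys ! i)" by simp
  qed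
  with 1 show "(ys = [] \<or> hd ys \<noteq> inv_letter x) \<and> reduced ys" by simp
next
  assume h: "(ys = [] \<or> hd ys \<noteq> inv_letter x) \<and> reduced ys"
  show "reduced (x # ys)" unfolding reduced_def
  proof (intro allI impI)
    fix i assume i: "Suc i < length (x # ys)"
    show "(x # ys) ! Suc i \<noteq> inv_letter ((x # ys) ! i)"
    proof (cases i)
      case 0
      with i h show ?thesis by (cases ys) auto
    next
      case (Suc j)
      with i h show ?thesis unfolding reduced_def by auto
    qed
  qed
qed

lemma reduced_cancel: "reduced t \<Longrightarrow> reduced (cancel x t)"
proof (cases t)
  case Nil then show ?thesis by (simp add: reduced_Cons)
next
  case (Cons y ys)
  assume "reduced t"
  with Cons show ?thesis by (auto simp: reduced_Cons)
qed

lemma reduced_foldr: "reduced t \<Longrightarrow> reduced (foldr cancel p t)"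
  by (induction p) (auto intro: reduced_cancel)

lemma reduced_red: "reduced (red w)"
  unfolding red_def by (rule reduced_foldr) simp

lemma cancel_cancel: "reduced zs \<Longrightarrow> cancel x (cancel (inv_letter x) zs) = zs"
proof (cases zs)
  case Nil then show ?thesis by simp
next
  case (Cons y ys)
  assume r: "reduced zs"
  show ?thesis
  proof (cases "y = x")
    case True
    then show ?thesis using r Cons by (cases ys) (auto simp: reduced_Cons)
  next
    case False
    then show ?thesis using Cons by simp
  qed
qed

lemma red_append: "red (xs @ ys) = foldr cancel xs (red ys)"
  by (simp add: red_def)

lemma inv_word_Nil[simp]: "inv_word [] = []"
  by (simp add: inv_word_def)

lemma inv_word_Cons[simp]: "inv_word (x # g) = inv_word g @ [inv_letter x]"
  by (simp add: inv_word_def)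

lemma inv_word_append[simp]: "inv_word (xs @ ys) = inv_word ys @ inv_word xs"
  by (simp add: inv_word_def)

lemma inv_word_inv[simp]: "inv_word (inv_word g) = g"
  by (induction g) auto

lemma red_cancel_pair: "red (g @ inv_word g @ ys) = red ys"
proof (induction g arbitrary: ys)
  case Nil then show ?case by simp
next
  case (Cons x g)
  have "red ((x # g) @ inv_word (x # g) @ ys) = cancel x (red (g @ inv_word g @ (inv_letter x # ys)))"
    by (simp add: red_def)
  also have "\<dots> = cancel x (red (inv_letter x # ys))" using Cons by simp
  also have "\<dots> = cancel x (cancel (inv_letter x) (red ys))" by (simp add: red_def)
  also have "\<dots> = red ys" using cancel_cancel reduced_red by simp
  finally show ?case .
qed

lemma red_cong: "red ys = red zs \<Longrightarrow> red (xs @ ys) = red (xs @ zs)"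
  by (simp add: red_append)

lemma ph_Nil[simp]: "ph [] = []" by (simp add: ph_def)
lemma ph_Cons[simp]: "ph (x # xs) = phl x @ ph xs" by (simp add: ph_def)
lemma ph_append[simp]: "ph (xs @ ys) = ph xs @ ph ys" by (simp add: ph_def)

lemma phl_inv: "phl (inv_letter x) = inv_word (phl x)"
proof (cases x)
  case (Pair g s)
  then show ?thesis by (cases g; cases s) (simp_all add: phl_def inv_letter_def inv_word_def)
qed

lemma ph_inv_word: "ph (inv_word g) = inv_word (ph g)"
  by (induction g) (simp_all add: phl_inv)

lemma red_reduce1: "reduce1 p q \<Longrightarrow> red (ph p) = red (ph q)"
proof (induction rule: reduce1.induct)
  case (1 xs x ys)
  have "red (phl x @ inv_word (phl x) @ ph ys) = red (ph ys)" by (rule red_cancel_pair)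
  then have "red (ph xs @ (phl x @ inv_word (phl x) @ ph ys)) = red (ph xs @ ph ys)"
    by (rule red_cong)
  then show ?case by (simp add: phl_inv)
qed

lemma red_free_eq: "free_eq u v \<Longrightarrow> red (ph u) = red (ph v)"
  unfolding free_eq_def
proof (induction rule: rtranclp_induct)
  case base then show ?case by simp
next
  case (step y z)
  then show ?case using red_reduce1 by auto
qed

definition g0 :: word where "g0 = [a, b, a', b']"

lemma ph_rel: "ph rel = g0 @ inv_word g0"
  by (simp add: rel_def g0_def phl_def a_def b_def c_def a'_def b'_def inv_word_def inv_letter_def)

lemma red_conj: "red (ph g @ ph rel @ inv_word (ph g)) = []"
proof -
  have "red (ph rel @ inv_word (ph g)) = red (inv_word (ph g))"
    unfolding ph_rel using red_cancel_pair[of g0 "inv_word (ph g)"] by simp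
  then have "red (ph g @ ph rel @ inv_word (ph g)) = red (ph g @ inv_word (ph g))"
    by (rule red_cong)
  also have "\<dots> = red []" using red_cancel_pair[of "ph g" "[]"] by simp
  finally show ?thesis by (simp add: red_def)
qed

lemma red_conj': "red (ph g @ ph (inv_word rel) @ inv_word (ph g)) = []"
proof -
  have "ph (inv_word rel) = ph rel" by (simp add: ph_inv_word ph_rel)
  then show ?thesis using red_conj by simp
qed

lemma red_conj_prods: "u \<in> conj_prods \<Longrightarrow> red (ph u) = []"
proof (induction rule: conj_prods.induct)
  case nil then show ?case by (simp add: red_def)
next
  case (pos u g)
  have "red (ph g @ ph rel @ inv_word (ph g)) = red []" using red_conj by (simp add: red_def)
  then have "red (ph u @ (ph g @ ph rel @ inv_word (ph g))) = red (ph u @ [])" by (rule red_cong)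
  with pos show ?case by (simp add: ph_inv_word)
next
  case (neg u g)
  have "red (ph g @ ph (inv_word rel) @ inv_word (ph g)) = red []" using red_conj' by (simp add: red_def)
  then have "red (ph u @ (ph g @ ph (inv_word rel) @ inv_word (ph g))) = red (ph u @ [])" by (rule red_cong)
  with neg show ?case by (simp only: ph_append) (simp add: ph_inv_word)
qed

lemma red_in_N: "in_N w \<Longrightarrow> red (ph w) = []"
  unfolding in_N_def using red_free_eq red_conj_prods by metis

section \<open>Piece-free words\<close>

definition pf :: "word \<Rightarrow> bool" where
  "pf w \<longleftrightarrow> reduced w \<and> (\<forall>p. piece p \<and> length p = 4 \<longrightarrow> \<not> sublist p w)"

lemma pieces4_piece: "p \<in> set pieces4 \<Longrightarrow> piece p \<and> length p = 4"
  unfolding pieces4_def piece_def R_def r1_def r2_def r3_def r4_def r5_def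
  by (auto simp: inv_word_def inv_letter_def a_def b_def c_def a'_def b'_def)

lemma pf_Cons: "pf (x # v) \<Longrightarrow> pf v"
  unfolding pf_def using reduced_Cons by (meson sublist_Cons_right)

lemma pf_append: "pf (u @ v) \<Longrightarrow> pf v"
  by (induction u) (auto dest: pf_Cons)

lemma pf_take: "pf w \<Longrightarrow> pf (take n w)"
  unfolding pf_def reduced_def
  by (auto simp: nth_take dest: sublist_order.order.trans[OF _ sublist_take])

lemma pf_okstart: "pf (x # v) \<Longrightarrow> okstart x v"
  unfolding okstart_def
proof
  assume h: "pf (x # v)"
  then show "v = [] \<or> hd v \<noteq> inv_letter x" unfolding pf_def using reduced_Cons by blast
  show "take 4 (x # v) \<notin> set pieces4"
  proof
    assume "take 4 (x # v) \<in> set pieces4"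
    then have "piece (take 4 (x # v)) \<and> length (take 4 (x # v)) = 4" by (rule pieces4_piece)
    moreover have "sublist (take 4 (x # v)) (x # v)"
      by (rule prefix_imp_sublist[OF take_is_prefix])
    ultimately show False using h unfolding pf_def by blast
  qed
qed

lemma in_letters: "x \<in> set letters"
proof (cases x)
  case (Pair g s)
  then show ?thesis by (cases g; cases s) (simp_all add: letters_def)
qed

lemma crec_sound: "crec P n v \<Longrightarrow> pf (u @ v) \<Longrightarrow> length u = n \<Longrightarrow> P (u @ v)"
proof (induction n arbitrary: u v)
  case 0 then show ?case by simp
next
  case (Suc n)
  obtain u' x where u: "u = u' @ [x]" using Suc.prems(3) by (cases u rule: rev_exhaust) auto
  have pfx: "pf (x # v)" using Suc.prems(2) u pf_append[of u' "x # v"] by simp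
  then have "okstart x v" by (rule pf_okstart)
  with Suc.prems(1) in_letters[of x] have "crec P n (x # v)" by (auto simp: list_all_iff)
  from Suc.IH[OF this, of u'] Suc.prems u show ?case by simp
qed

lemma crec_app: "crec P n [] \<Longrightarrow> pf u \<Longrightarrow> length u = n \<Longrightarrow> P u"
  using crec_sound[of P n "[]" u] by simp

lemma symf_sound: "symf p t hs = Some r \<Longrightarrow> (s = [] \<or> hd s \<in> set hs) \<Longrightarrow> foldr cancel p (t @ s) = r @ s"
proof (induction p arbitrary: r)
  case Nil then show ?case by simp
next
  case (Cons y p)
  then obtain r0 where r0: "symf p t hs = Some r0" by (cases "symf p t hs") auto
  with Cons have IH: "foldr cancel p (t @ s) = r0 @ s" by simp
  show ?case
  proof (cases r0)
    case Nil
    with Cons.prems r0 have "inv_letter y \<notin> set hs" "r = [y]" by (auto split: if_splits)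
    with Cons.prems(2) IH Nil show ?thesis by (cases s) auto
  next
    case (Cons z zs)
    with Cons.prems r0 have "r = cancel y (z # zs)" by auto
    with IH Cons show ?thesis by simp
  qed
qed

lemma base_inv:
  assumes "pf w" "w \<noteq> []" "length w \<le> 3"
  shows "F w \<noteq> [] \<and> (\<exists>s. red (ph w) = F w @ s \<and> (s \<noteq> [] \<longrightarrow> hd s \<in> set (H w)))"
proof -
  have "0 < length w" using assms(2) by simp
  then have "length w = 1 \<or> length w = 2 \<or> length w = 3" using assms(3) by linarith
  then have "Pbase w" using crec_app[OF crec_base1 assms(1)] crec_app[OF crec_base2 assms(1)]
      crec_app[OF crec_base3 assms(1)] by auto
  then have 1: "F w \<noteq> []" and 2: "take (length (F w)) (red (ph w)) = F w"
    and 3: "drop (length (F w)) (red (ph w)) \<noteq> [] \<longrightarrow> hd (drop (length (F w)) (red (ph w))) \<in> set (H w)"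
    unfolding Pbase_def Let_def by auto
  have "red (ph w) = F w @ drop (length (F w)) (red (ph w))"
    using 2 append_take_drop_id[of "length (F w)" "red (ph w)"] by simp
  with 1 3 show ?thesis by blast
qed

lemma main_inv:
  "pf w \<Longrightarrow> w \<noteq> [] \<Longrightarrow> \<exists>s. red (ph w) = F (take 3 w) @ s \<and> (s \<noteq> [] \<longrightarrow> hd s \<in> set (H (take 3 w)))"
proof (induction w)
  case Nil then show ?case by simp
next
  case (Cons x w')
  show ?case
  proof (cases "length (x # w') \<le> 3")
    case True
    then show ?thesis using base_inv[OF Cons.prems] by simp
  next
    case False
    then have lw: "length w' \<ge> 3" by simp
    then have "w' \<noteq> []" by auto
    from Cons.IH[OF pf_Cons[OF Cons.prems(1)] this] obtain s where
      s: "red (ph w') = F (take 3 w') @ s" "s \<noteq> [] \<longrightarrow> hd s \<in> set (H (take 3 w'))" by blast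
    define v where "v = take 3 w'"
    define u where "u = x # v"
    have u4: "u = take 4 (x # w')" by (simp add: u_def v_def numeral_eq_Suc)
    have lu: "length u = 4" using lw by (simp add: u_def v_def)
    have t3: "take 3 u = take 3 (x # w')" by (simp add: u_def v_def numeral_eq_Suc)
    have "pf u" unfolding u4 by (rule pf_take[OF Cons.prems(1)])
    from crec_app[OF crec_step this lu] have "Pstep u" .
    then obtain r where r: "symf (phl x) (F v) (H v) = Some r"
      and pre: "take (length (F (take 3 u))) r = F (take 3 u)"
      and c1: "drop (length (F (take 3 u))) r = [] \<longrightarrow> set (H v) \<subseteq> set (H (take 3 u))"
      and c2: "drop (length (F (take 3 u))) r \<noteq> [] \<longrightarrow> hd (drop (length (F (take 3 u))) r) \<in> set (H (take 3 u))"
      unfolding Pstep_def u_def Let_def by (auto split: option.splits)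
    define rest where "rest = drop (length (F (take 3 u))) r"
    have rdec: "r = F (take 3 u) @ rest"
      using pre append_take_drop_id[of "length (F (take 3 u))" r] by (simp add: rest_def)
    have "red (ph (x # w')) = foldr cancel (phl x) (red (ph w'))"
      by (simp add: red_append)
    also have "\<dots> = foldr cancel (phl x) (F v @ s)" using s by (simp add: v_def)
    also have "\<dots> = r @ s" using symf_sound[OF r] s(2) by (auto simp: v_def)
    also have "\<dots> = F (take 3 (x # w')) @ (rest @ s)" using rdec t3 by simp
    finally have eq: "red (ph (x # w')) = F (take 3 (x # w')) @ (rest @ s)" .
    have "rest @ s \<noteq> [] \<longrightarrow> hd (rest @ s) \<in> set (H (take 3 (x # w')))"
    proof (cases "rest = []")
      case True
      then show ?thesis using c1 s(2) t3 by (auto simp: rest_def v_def)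
    next
      case False
      then show ?thesis using c2 t3 by (simp add: rest_def)
    qed
    with eq show ?thesis by blast
  qed
qed

lemma pf_red_nonempty: "pf w \<Longrightarrow> w \<noteq> [] \<Longrightarrow> red (ph w) \<noteq> []"
proof -
  assume h: "pf w" "w \<noteq> []"
  have "pf (take 3 w)" "take 3 w \<noteq> []" "length (take 3 w) \<le> 3"
    using h pf_take by auto
  then have "F (take 3 w) \<noteq> []" using base_inv by blast
  with main_inv[OF h] show ?thesis by auto
qed

theorem theorem3p1:
  fixes w :: word
  assumes "w \<noteq> []" and "cyclically_reduced w" and "in_N w"
  shows "\<exists>p. piece p \<and> length p = 4 \<and> sublist p w"
proof (rule ccontr)
  assume "\<not> ?thesis"
  then have "pf w" using assms(2) unfolding pf_def cyclically_reduced_def by blast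
  have "red (ph w) \<noteq> []" using pf_red_nonempty[OF \<open>pf w\<close> assms(1)] .
  with red_in_N[OF assms(3)] show False by simp
qed

end
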